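(* Let $M>1$, $q>0$ and $n>-2$ be real parameters, and define the sets \[ \begin{aligned} A&=\{s\in\mathbb{R}: |s-(n-s)|\le q,\ 0\le s\le M,\ 0\le n-s\le M\},\\ B&=\{s\in\mathbb{R}: |s-(n+1-s)|\le q,\ 0\le s\le M,\ 0\le n+1-s\le M\},\\ C&=\{s\in\mathbb{R}: |s-(n-s)|\le q,\ 0\le s+1\le M,\ 0\le n+1-s\le M\}. \end{aligned} \] Then \[ \int_{A}\binom{M-1}{s}\binom{M-1}{n-s}ds\ \ge\ \int_{A}\binom{M}{s}\binom{M-2}{n-s}ds, \] \[ \int_{B}\binom{M-1}{s}\binom{M-1}{n-s}ds\ \le\ \int_{B}\binom{M}{s}\binom{M-2}{n-s}ds, \] \[ \int_{C}\binom{M-1}{s}\binom{M-1}{n-s}ds\ \ge\ \int_{C}\binom{M}{s+1}\binom{M-2}{n-s-1}ds. \]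
   Context: For real $a>-1$ and real $s$, the generalized binomial coefficient is $\binom{a}{s}=\Gamma(a+1)\cdot\frac{1}{\Gamma(s+1)}\cdot\frac{1}{\Gamma(a-s+1)}$, where $\Gamma$ is the Gamma function and $1/\Gamma$ is understood as the entire function (equal to $0$ at the poles of $\Gamma$, i.e. at non-positive integers). *)

theory Defs
  imports "HOL-Analysis.Analysis"
begin

text \<open>Generalized binomial coefficient for real a > -1 and real s:
  Gamma(a+1) * (1/Gamma)(s+1) * (1/Gamma)(a-s+1), with 1/Gamma the entire
  reciprocal Gamma function rGamma (zero at non-positive integers).\<close>
definition rbinom :: "real \<Rightarrow> real \<Rightarrow> real" where
  "rbinom a s = Gamma (a + 1) * rGamma (s + 1) * rGamma (a - s + 1)"

end

theory Submission
  imports Defs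
begin

lemma cont_rbinom[continuous_intros]:
  "continuous_on S f \<Longrightarrow> continuous_on S (\<lambda>s. rbinom a (f s))"
proof -
  have r: "continuous_on S (\<lambda>x. rGamma (g x))" if "continuous_on S g" for g
    by (rule continuous_on_compose2[OF continuous_on_rGamma[of UNIV] that]) auto
  show ?thesis if "continuous_on S f" unfolding rbinom_def
    by (intro continuous_intros r that)
qed

lemma rG_nonneg: "(x::real) \<ge> 0 \<Longrightarrow> rGamma x \<ge> 0"
  by (cases "x = 0") (auto simp: rGamma_inverse_Gamma less_le)

lemma cont_int: "continuous_on UNIV h \<Longrightarrow> (h::real\<Rightarrow>real) integrable_on {a..b}"
  by (rule integrable_continuous_interval) (rule continuous_on_subset, auto)

lemma shift_int: "integral {a..b} (\<lambda>s. h (s - 1)) = integral {a-1..b-1} (h::real\<Rightarrow>real)"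
  using integral_shift_real_ivl[of "a-1" "-1" "b-1" h] by simp

lemma reflect_int: "integral {a..b} (\<phi>::real\<Rightarrow>real) = integral {c-b..c-a} (\<lambda>t. \<phi> (c - t))"
  using integral_shift_real_ivl[of "-b" "-c" "-a" "\<lambda>y. \<phi> (-y)"] by simp

lemma tele:
  assumes ch: "continuous_on UNIV (h::real\<Rightarrow>real)" and ab: "a \<le> b"
  shows "integral {a..b} (\<lambda>s. h s - h (s-1)) = integral {b-1..b} h - integral {a-1..a} h"
proof -
  have ch2: "continuous_on UNIV (\<lambda>s. h (s - 1))"
    by (rule continuous_on_compose2[OF ch]) (auto intro: continuous_intros)
  have "integral {a..b} (\<lambda>s. h s - h (s-1)) = integral {a..b} h - integral {a-1..b-1} h"
    by (simp add: integral_diff cont_int[OF ch] cont_int[OF ch2] shift_int)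
  moreover have "integral {a-1..a} h + integral {a..b} h = integral {a-1..b} h"
    by (rule Henstock_Kurzweil_Integration.integral_combine) (use ab cont_int[OF ch] in auto)
  moreover have "integral {a-1..b-1} h + integral {b-1..b} h = integral {a-1..b} h"
    by (rule Henstock_Kurzweil_Integration.integral_combine) (use ab cont_int[OF ch] in auto)
  ultimately show ?thesis by linarith
qed

lemma main_step:
  assumes ch: "continuous_on UNIV (h::real\<Rightarrow>real)" and ab: "a \<le> b"
  shows "integral {a..b} (\<lambda>s. h s - h (s-1)) = integral {b-1..b} (\<lambda>t. h t - h (a+b-1-t))"
proof -
  have ch2: "continuous_on UNIV (\<lambda>t. h (a+b-1-t))"
    by (rule continuous_on_compose2[OF ch]) (auto intro: continuous_intros)
  have "integral {a-1..a} h = integral {(a+b-1)-a..(a+b-1)-(a-1)} (\<lambda>t. h (a+b-1-t))"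
    by (rule reflect_int)
  also have "{(a+b-1)-a..(a+b-1)-(a-1)} = {b-1..b}" by simp
  finally show ?thesis using tele[OF ch ab]
    by (simp add: integral_diff cont_int[OF ch] cont_int[OF ch2])
qed

lemma antisym_int:
  assumes cD: "continuous_on UNIV (D::real\<Rightarrow>real)" and anti: "\<And>t. D (c - t) = - D t"
    and lh: "lo \<le> hi" and c: "c \<le> lo + hi"
    and pos: "\<And>t. lo \<le> t \<Longrightarrow> t \<le> hi \<Longrightarrow> c \<le> 2*t \<Longrightarrow> c \<le> t + lo \<Longrightarrow> 0 \<le> D t"
  shows "0 \<le> integral {lo..hi} D"
proof (cases "c \<le> 2*lo")
  case True
  show ?thesis
    by (rule integral_nonneg[OF cont_int[OF cD]]) (use True in \<open>auto intro!: pos\<close>)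
next
  case False
  define r where "r = c - lo"
  have "integral {lo..r} D = integral {c-r..c-lo} (\<lambda>t. D (c - t))" by (rule reflect_int)
  also have "\<dots> = integral {lo..r} (\<lambda>t. - D t)" by (simp add: r_def anti)
  finally have z: "integral {lo..r} D = 0" by simp
  have "integral {lo..r} D + integral {r..hi} D = integral {lo..hi} D"
    by (rule Henstock_Kurzweil_Integration.integral_combine) (use False c r_def cont_int[OF cD] in auto)
  moreover have "0 \<le> integral {r..hi} D"
    by (rule integral_nonneg[OF cont_int[OF cD]]) (use False r_def in \<open>auto intro!: pos\<close>)
  ultimately show ?thesis using z by simp
qed

lemma pascal:
  assumes "a > 0"
  shows "rbinom a x = rbinom (a-1) x + rbinom (a-1) (x-1)"
proof -
  have g: "Gamma (a+1) = a * Gamma a" using assms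
    by (intro Gamma_plus1) (auto simp: nonpos_Ints_def)
  hence g': "Gamma (1+a) = a * Gamma a" by (simp add: add.commute)
  have r1: "rGamma (a - x) = (a - x) * rGamma (a - x + 1)" using rGamma_plus1[of "a-x"] by simp
  have r2: "rGamma x = x * rGamma (x + 1)" using rGamma_plus1[of x] by simp
  show ?thesis unfolding rbinom_def
    by (simp add: g g' r1 r2 algebra_simps)
qed

lemma idA:
  assumes "M > (1::real)"
  shows "rbinom (M-1) s * rbinom (M-1) (n-s) - rbinom M s * rbinom (M-2) (n-s)
     = rbinom (M-1) s * rbinom (M-2) (n-s-1) - rbinom (M-1) (s-1) * rbinom (M-2) (n-(s-1)-1)"
proof -
  have p1: "rbinom M s = rbinom (M-1) s + rbinom (M-1) (s-1)" using assms by (intro pascal) auto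
  have p2: "rbinom (M-1) (n-s) = rbinom (M-2) (n-s) + rbinom (M-2) (n-s-1)"
    using pascal[of "M-1" "n-s"] assms by (simp add: algebra_simps)
  show ?thesis unfolding p1 p2 by (simp add: algebra_simps)
qed

lemma idC:
  assumes "M > (1::real)"
  shows "rbinom (M-1) s * rbinom (M-1) (n-s) - rbinom M (s+1) * rbinom (M-2) (n-s-1)
     = rbinom (M-1) ((s-1)+1) * rbinom (M-2) (n-(s-1)-1) - rbinom (M-1) (s+1) * rbinom (M-2) (n-s-1)"
proof -
  have p1: "rbinom M (s+1) = rbinom (M-1) (s+1) + rbinom (M-1) s" using assms pascal[of M "s+1"] by auto
  have p2: "rbinom (M-1) (n-s) = rbinom (M-2) (n-s) + rbinom (M-2) (n-s-1)"
    using pascal[of "M-1" "n-s"] assms by (simp add: algebra_simps)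
  show ?thesis unfolding p1 p2 by (simp add: algebra_simps)
qed

lemma DA:
  assumes "M > (1::real)"
  shows "rbinom (M-1) t * rbinom (M-2) (n-t-1) - rbinom (M-1) (n-1-t) * rbinom (M-2) (n-(n-1-t)-1)
    = Gamma M * Gamma (M-1) * rGamma (t+1) * rGamma (n-t) * rGamma (M-t) * rGamma (M-n+t+1) * (2*t-n+1)"
proof -
  have r1: "rGamma (M-1-t) = (M-1-t) * rGamma (M-t)" using rGamma_plus1[of "M-1-t"] by simp
  have r2: "rGamma (M-n+t) = (M-n+t) * rGamma (M-n+t+1)" using rGamma_plus1[of "M-n+t"] by simp
  have r1': "rGamma (M-(1+t)) = (M-1-t) * rGamma (M-t)" using r1 by (simp add: algebra_simps)
  have r2': "rGamma (M+t-n) = (M-n+t) * rGamma (1+(M+t)-n)" using r2 by (simp add: algebra_simps)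
  show ?thesis unfolding rbinom_def by (simp add: r1' r2' algebra_simps)
qed
lemma DB:
  assumes "M > (1::real)"
  shows "rbinom (M-1) (n-t) * rbinom (M-2) (n-(n-t)-1) - rbinom (M-1) t * rbinom (M-2) (n-t-1)
    = Gamma M * Gamma (M-1) * rGamma (M-t) * rGamma (M-n+t) * rGamma (t+1) * rGamma (n-t+1) * (2*t-n)"
proof -
  have r1: "rGamma t = t * rGamma (t+1)" using rGamma_plus1[of "t"] by simp
  have r2: "rGamma (n-t) = (n-t) * rGamma (n-t+1)" using rGamma_plus1[of "n-t"] by simp
  show ?thesis unfolding rbinom_def by (simp add: r1 r2 algebra_simps)
qed

lemma DC:
  assumes "M > (1::real)"
  shows "rbinom (M-1) (n-1-t+1) * rbinom (M-2) (n-(n-1-t)-1) - rbinom (M-1) (t+1) * rbinom (M-2) (n-t-1)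
    = Gamma M * Gamma (M-1) * rGamma (M-1-t) * rGamma (M-n+t) * rGamma (n-t+1) * rGamma (t+2) * (2*t+1-n)"
proof -
  have r1: "rGamma (t+1) = (t+1) * rGamma (t+2)" using rGamma_plus1[of "t+1"] by (simp add: add.commute)
  have r2: "rGamma (n-t) = (n-t) * rGamma (n-t+1)" using rGamma_plus1[of "n-t"] by simp
  have r1': "rGamma (1+t) = (t+1) * rGamma (t+2)" using r1 by (simp add: add.commute)
  show ?thesis unfolding rbinom_def by (simp add: r1' r2 algebra_simps)
qed
theorem lemma2:
  fixes M q n :: real
  assumes "M > 1" and "q > 0" and "n > -2"
  defines "A \<equiv> {s::real. \<bar>s - (n - s)\<bar> \<le> q \<and> 0 \<le> s \<and> s \<le> M \<and> 0 \<le> n - s \<and> n - s \<le> M}"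
    and "B \<equiv> {s::real. \<bar>s - (n + 1 - s)\<bar> \<le> q \<and> 0 \<le> s \<and> s \<le> M \<and> 0 \<le> n + 1 - s \<and> n + 1 - s \<le> M}"
    and "C \<equiv> {s::real. \<bar>s - (n - s)\<bar> \<le> q \<and> 0 \<le> s + 1 \<and> s + 1 \<le> M \<and> 0 \<le> n + 1 - s \<and> n + 1 - s \<le> M}"
  shows "integral A (\<lambda>s. rbinom (M - 1) s * rbinom (M - 1) (n - s))
           \<ge> integral A (\<lambda>s. rbinom M s * rbinom (M - 2) (n - s))
    \<and> integral B (\<lambda>s. rbinom (M - 1) s * rbinom (M - 1) (n - s))
           \<le> integral B (\<lambda>s. rbinom M s * rbinom (M - 2) (n - s))
    \<and> integral C (\<lambda>s. rbinom (M - 1) s * rbinom (M - 1) (n - s))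
           \<ge> integral C (\<lambda>s. rbinom M (s + 1) * rbinom (M - 2) (n - s - 1))"
proof -
  have M1: "M > 1" by fact
  define f where "f = (\<lambda>s. rbinom (M - 1) s * rbinom (M - 1) (n - s))"
  define g where "g = (\<lambda>s. rbinom M s * rbinom (M - 2) (n - s))"
  define g3 where "g3 = (\<lambda>s. rbinom M (s + 1) * rbinom (M - 2) (n - s - 1))"
  define hA where "hA = (\<lambda>x. rbinom (M-1) x * rbinom (M-2) (n-x-1))"
  define h2 where "h2 = (\<lambda>x. rbinom (M-1) (x+1) * rbinom (M-2) (n-x-1))"
  have cf: "continuous_on UNIV f" unfolding f_def by (intro continuous_intros)
  have cg: "continuous_on UNIV g" unfolding g_def by (intro continuous_intros)
  have cg3: "continuous_on UNIV g3" unfolding g3_def by (intro continuous_intros)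
  have chA: "continuous_on UNIV hA" unfolding hA_def by (intro continuous_intros)
  have ch2: "continuous_on UNIV h2" unfolding h2_def by (intro continuous_intros)
  have GM: "Gamma M \<ge> 0" "Gamma (M-1) \<ge> 0" using M1
    by (intro less_imp_le Gamma_real_pos; simp)+
  have fg: "f s - g s = hA s - hA (s-1)" for s
    unfolding f_def g_def hA_def using idA[OF M1, of s n] by simp
  have fg3: "f s - g3 s = - (h2 s - h2 (s-1))" for s
    unfolding f_def g3_def h2_def using idC[OF M1, of s n] by simp
  have diffeq: "integral {a..b} f - integral {a..b} G = integral {a..b} (\<lambda>s. f s - G s)"
    if "continuous_on UNIV G" for a b G
    by (simp add: integral_diff cont_int[OF cf] cont_int[OF that])

  define a where "a = max (max ((n-q)/2) 0) (n-M)"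
  define b where "b = min (min ((n+q)/2) M) n"
  have Aeq: "A = {a..b}" unfolding A_def a_def b_def by (auto simp: abs_le_iff)
  have partA: "integral A g \<le> integral A f"
  proof (cases "a \<le> b")
    case False thus ?thesis by (simp add: Aeq)
  next
    case True
    have sab: "a + b = n" unfolding a_def b_def by (auto simp: max_def min_def field_simps)
    have "integral {a..b} f - integral {a..b} g = integral {a..b} (\<lambda>s. hA s - hA (s-1))"
      by (simp add: diffeq[OF cg] fg)
    also have "\<dots> = integral {b-1..b} (\<lambda>t. hA t - hA (a+b-1-t))" by (rule main_step[OF chA True])
    also have "\<dots> = integral {b-1..b} (\<lambda>t. hA t - hA (n-1-t))" by (simp add: sab)
    finally have eq: "integral {a..b} f - integral {a..b} g = integral {b-1..b} (\<lambda>t. hA t - hA (n-1-t))" .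
    have "0 \<le> integral {b-1..b} (\<lambda>t. hA t - hA (n-1-t))"
    proof (rule antisym_int[where c="n-1"])
      show "continuous_on UNIV (\<lambda>t. hA t - hA (n-1-t))"
        by (intro continuous_intros continuous_on_compose2[OF chA]) auto
      show "hA (n - 1 - t) - hA (n - 1 - (n - 1 - t)) = - (hA t - hA (n - 1 - t))" for t by simp
      show "n - 1 \<le> b - 1 + b" using True sab by linarith
    next
      fix t assume t: "b - 1 \<le> t" "t \<le> b" "n - 1 \<le> 2 * t" "n - 1 \<le> t + (b - 1)"
      have ta: "a \<le> t" using t sab by linarith
      have "a \<ge> 0" "a \<ge> n - M" "b \<le> M" "b \<le> n" unfolding a_def b_def by auto
      hence "0 \<le> Gamma M * Gamma (M-1) * rGamma (t+1) * rGamma (n-t) * rGamma (M-t) * rGamma (M-n+t+1) * (2*t-n+1)"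
        using t ta GM by (intro mult_nonneg_nonneg rG_nonneg) auto
      thus "0 \<le> hA t - hA (n - 1 - t)" unfolding hA_def using DA[OF M1, of t n] by simp
    qed simp
    thus ?thesis using eq Aeq by simp
  qed

  define a1 where "a1 = max (max ((n+1-q)/2) 0) (n+1-M)"
  define b1 where "b1 = min (min ((n+1+q)/2) M) (n+1)"
  have Beq: "B = {a1..b1}" unfolding B_def a1_def b1_def by (auto simp: abs_le_iff)
  have partB: "integral B f \<le> integral B g"
  proof (cases "a1 \<le> b1")
    case False thus ?thesis by (simp add: Beq)
  next
    case True
    have sab: "a1 + b1 = n + 1" unfolding a1_def b1_def by (auto simp: max_def min_def field_simps)
    have "integral {a1..b1} f - integral {a1..b1} g = integral {a1..b1} (\<lambda>s. hA s - hA (s-1))"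
      by (simp add: diffeq[OF cg] fg)
    also have "\<dots> = integral {b1-1..b1} (\<lambda>t. hA t - hA (a1+b1-1-t))" by (rule main_step[OF chA True])
    also have "\<dots> = integral {b1-1..b1} (\<lambda>t. - (hA (n-t) - hA t))" by (simp add: sab)
    also have "\<dots> = - integral {b1-1..b1} (\<lambda>t. hA (n-t) - hA t)" by (rule integral_neg)
    finally have eq: "integral {a1..b1} f - integral {a1..b1} g = - integral {b1-1..b1} (\<lambda>t. hA (n-t) - hA t)" .
    have "0 \<le> integral {b1-1..b1} (\<lambda>t. hA (n-t) - hA t)"
    proof (rule antisym_int[where c="n"])
      show "continuous_on UNIV (\<lambda>t. hA (n-t) - hA t)"
        by (intro continuous_intros continuous_on_compose2[OF chA]) auto
      show "hA (n - (n - t)) - hA (n - t) = - (hA (n - t) - hA t)" for t by simp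
      show "n \<le> b1 - 1 + b1" using True sab by linarith
    next
      fix t assume t: "b1 - 1 \<le> t" "t \<le> b1" "n \<le> 2 * t" "n \<le> t + (b1 - 1)"
      have ta: "a1 \<le> t" using t sab by linarith
      have "a1 \<ge> 0" "a1 \<ge> n + 1 - M" "b1 \<le> M" "b1 \<le> n + 1" unfolding a1_def b1_def by auto
      hence "0 \<le> Gamma M * Gamma (M-1) * rGamma (M-t) * rGamma (M-n+t) * rGamma (t+1) * rGamma (n-t+1) * (2*t-n)"
        using t ta GM by (intro mult_nonneg_nonneg rG_nonneg) auto
      thus "0 \<le> hA (n - t) - hA t" unfolding hA_def using DB[OF M1, of n t] by simp
    qed simp
    thus ?thesis using eq Beq by simp
  qed

  define a2 where "a2 = max (max ((n-q)/2) (-1)) (n+1-M)"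
  define b2 where "b2 = min (min ((n+q)/2) (M-1)) (n+1)"
  have Ceq: "C = {a2..b2}" unfolding C_def a2_def b2_def by (auto simp: abs_le_iff)
  have partC: "integral C g3 \<le> integral C f"
  proof (cases "a2 \<le> b2")
    case False thus ?thesis by (simp add: Ceq)
  next
    case True
    have sab: "a2 + b2 = n" unfolding a2_def b2_def by (auto simp: max_def min_def field_simps)
    have "integral {a2..b2} f - integral {a2..b2} g3 = integral {a2..b2} (\<lambda>s. - (h2 s - h2 (s-1)))"
      by (simp add: diffeq[OF cg3] fg3)
    also have "\<dots> = - integral {a2..b2} (\<lambda>s. h2 s - h2 (s-1))" by (rule integral_neg)
    also have "integral {a2..b2} (\<lambda>s. h2 s - h2 (s-1)) = integral {b2-1..b2} (\<lambda>t. h2 t - h2 (a2+b2-1-t))"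
      by (rule main_step[OF ch2 True])
    also have "\<dots> = integral {b2-1..b2} (\<lambda>t. - (h2 (n-1-t) - h2 t))" by (simp add: sab)
    also have "\<dots> = - integral {b2-1..b2} (\<lambda>t. h2 (n-1-t) - h2 t)" by (rule integral_neg)
    finally have eq: "integral {a2..b2} f - integral {a2..b2} g3 = integral {b2-1..b2} (\<lambda>t. h2 (n-1-t) - h2 t)"
      by simp
    have "0 \<le> integral {b2-1..b2} (\<lambda>t. h2 (n-1-t) - h2 t)"
    proof (rule antisym_int[where c="n-1"])
      show "continuous_on UNIV (\<lambda>t. h2 (n-1-t) - h2 t)"
        by (intro continuous_intros continuous_on_compose2[OF ch2]) auto
      show "h2 (n - 1 - (n - 1 - t)) - h2 (n - 1 - t) = - (h2 (n - 1 - t) - h2 t)" for t by simp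
      show "n - 1 \<le> b2 - 1 + b2" using True sab by linarith
    next
      fix t assume t: "b2 - 1 \<le> t" "t \<le> b2" "n - 1 \<le> 2 * t" "n - 1 \<le> t + (b2 - 1)"
      have ta: "a2 \<le> t" using t sab by linarith
      have "a2 \<ge> -1" "a2 \<ge> n + 1 - M" "b2 \<le> M - 1" "b2 \<le> n + 1" unfolding a2_def b2_def by auto
      hence "0 \<le> Gamma M * Gamma (M-1) * rGamma (M-1-t) * rGamma (M-n+t) * rGamma (n-t+1) * rGamma (t+2) * (2*t+1-n)"
        using t ta GM by (intro mult_nonneg_nonneg rG_nonneg) auto
      thus "0 \<le> h2 (n - 1 - t) - h2 t" unfolding h2_def using DC[OF M1, of n t] by simp
    qed simp
    thus ?thesis using eq Ceq by simp
  qed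
  show ?thesis using partA partB partC unfolding f_def g_def g3_def by simp
qed
end
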